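(* The space $(\mathbb{R}^{n_1+n_2},d)$ is complete: every sequence $(x_n)$ in $\mathbb{R}^{n_1+n_2}$ with $\lim_{n,m\to\infty}d(x_n,x_m)=0$ has a limit $x\in\mathbb{R}^{n_1+n_2}$ with $\lim_{n\to\infty}d(x_n,x)=0$.
   Context: Fix integers $n_1,n_2\ge1$ and $\varkappa\in\mathbb{N}_+$, and write $x=(x',x'')\in\mathbb{R}^{n_1}\times\mathbb{R}^{n_2}$. Define $d(x,y)=|x'-y'|+\min\left\{\frac{|x''-y''|}{(|x'|+|y'|)^{\varkappa}},\,|x''-y''|^{1/(1+\varkappa)}\right\}$ (with the first entry of the minimum interpreted as $+\infty$ when $|x'|+|y'|=0$ and $x''\neq y''$), where $|\cdot|$ is the Euclidean norm. *)

theory Defs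
  imports "HOL-Analysis.Analysis"
begin

text \<open>Points of R^(n1+n2) are pairs (x', x'') with x' in R^n1, x'' in R^n2.
  kappa is a positive natural number. When |x'|+|y'| = 0 the first entry of the
  minimum is +infinity if x'' differs from y'', so the minimum is the second entry
  (which is 0 when x'' = y'').\<close>

definition dk :: "nat \<Rightarrow> (real^'n1) \<times> (real^'n2) \<Rightarrow> (real^'n1) \<times> (real^'n2) \<Rightarrow> real" where
  "dk \<kappa> x y =
     norm (fst x - fst y) +
     (if norm (fst x) + norm (fst y) = 0
      then norm (snd x - snd y) powr (1 / (1 + real \<kappa>))
      else min (norm (snd x - snd y) / (norm (fst x) + norm (fst y)) ^ \<kappa>)
               (norm (snd x - snd y) powr (1 / (1 + real \<kappa>))))"

end

theory Submission
  imports Defs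
begin

lemma dk_lower:
  fixes x y :: "(real^'n1) \<times> (real^'n2)"
  assumes "norm (fst x) + norm (fst y) \<le> M" "M \<ge> 1"
  shows "min (norm (snd x - snd y) / M ^ \<kappa>) (norm (snd x - snd y) powr (1 / (1 + real \<kappa>)))
         \<le> dk \<kappa> x y"
proof (cases "norm (fst x) + norm (fst y) = 0")
  case True
  then show ?thesis unfolding dk_def by (smt (verit) norm_ge_zero)
next
  case False
  let ?s = "norm (fst x) + norm (fst y)"
  have s: "?s > 0" using False by (smt (verit) norm_ge_zero)
  have "?s ^ \<kappa> \<le> M ^ \<kappa>" using s assms by (intro power_mono) auto
  hence "norm (snd x - snd y) / M ^ \<kappa> \<le> norm (snd x - snd y) / ?s ^ \<kappa>"
    using s assms(2) by (intro divide_left_mono) auto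
  then show ?thesis using False unfolding dk_def by (smt (verit) norm_ge_zero)
qed

lemma dk_upper:
  fixes x y :: "(real^'n1) \<times> (real^'n2)"
  shows "dk \<kappa> x y \<le> norm (fst x - fst y) + norm (snd x - snd y) powr (1 / (1 + real \<kappa>))"
  unfolding dk_def by auto

theorem lemma2p1:
  fixes \<kappa> :: nat and X :: "nat \<Rightarrow> (real^'n1) \<times> (real^'n2)"
  assumes "\<kappa> \<ge> 1"
    and "\<forall>e>0. \<exists>N. \<forall>n\<ge>N. \<forall>m\<ge>N. dk \<kappa> (X n) (X m) < e"
  shows "\<exists>x. (\<lambda>n. dk \<kappa> (X n) x) \<longlonglongrightarrow> 0"
proof -
  have nn: "norm (fst x - fst y) \<le> dk \<kappa> x y" for x y :: "(real^'n1) \<times> (real^'n2)"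
    unfolding dk_def by (auto intro!: min.boundedI)
  have C1: "Cauchy (\<lambda>n. fst (X n))"
  proof (rule metric_CauchyI)
    fix e :: real assume "e > 0"
    then obtain N where N: "\<forall>n\<ge>N. \<forall>m\<ge>N. dk \<kappa> (X n) (X m) < e" using assms(2) by blast
    show "\<exists>M. \<forall>m\<ge>M. \<forall>n\<ge>M. dist (fst (X m)) (fst (X n)) < e"
      by (rule exI[of _ N]) (metis N nn dist_norm le_less_trans)
  qed
  then obtain B where B: "\<forall>n. norm (fst (X n)) \<le> B"
    using cauchy_imp_bounded bounded_iff by (metis rangeI)
  define M where "M = max 1 (2 * B)"
  have M1: "M \<ge> 1" unfolding M_def by simp
  have sM: "norm (fst (X n)) + norm (fst (X m)) \<le> M" for n m
    using B[rule_format, of n] B[rule_format, of m] unfolding M_def by linarith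
  have C2: "Cauchy (\<lambda>n. snd (X n))"
  proof (rule metric_CauchyI)
    fix e :: real assume e: "e > 0"
    define \<delta> where "\<delta> = min (e / M ^ \<kappa>) (e powr (1 / (1 + real \<kappa>)))"
    have "\<delta> > 0" unfolding \<delta>_def using e M1 by simp
    then obtain N where N: "\<forall>n\<ge>N. \<forall>m\<ge>N. dk \<kappa> (X n) (X m) < \<delta>" using assms(2) by blast
    show "\<exists>K. \<forall>m\<ge>K. \<forall>n\<ge>K. dist (snd (X m)) (snd (X n)) < e"
    proof (rule exI[of _ N], intro allI impI)
      fix m n assume mn: "m \<ge> N" "n \<ge> N"
      let ?t = "norm (snd (X m) - snd (X n))"
      show "dist (snd (X m)) (snd (X n)) < e"
      proof (rule ccontr)
        assume "\<not> ?thesis"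
        hence te: "?t \<ge> e" by (simp add: dist_norm)
        have Mp: "M ^ \<kappa> > 0" using M1 by simp
        have a: "e / M ^ \<kappa> \<le> ?t / M ^ \<kappa>" using te Mp by (simp add: divide_right_mono)
        have b: "e powr (1 / (1 + real \<kappa>)) \<le> ?t powr (1 / (1 + real \<kappa>))"
          using te e by (intro powr_mono2) auto
        have "\<delta> \<le> min (?t / M ^ \<kappa>) (?t powr (1 / (1 + real \<kappa>)))"
          unfolding \<delta>_def using a b by linarith
        also have "\<dots> \<le> dk \<kappa> (X m) (X n)" by (rule dk_lower[OF sM M1])
        finally show False using N mn by force
      qed
    qed
  qed
  obtain a where a: "(\<lambda>n. fst (X n)) \<longlonglongrightarrow> a" using C1 Cauchy_convergent_iff convergent_def by blast
  obtain b where b: "(\<lambda>n. snd (X n)) \<longlonglongrightarrow> b" using C2 Cauchy_convergent_iff convergent_def by blast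
  have l1: "(\<lambda>n. norm (fst (X n) - a)) \<longlonglongrightarrow> 0"
    using a by (simp add: tendsto_norm_zero tendsto_diff [THEN tendsto_eq_rhs] LIM_zero)
  have l2': "(\<lambda>n. norm (snd (X n) - b)) \<longlonglongrightarrow> 0"
    using b by (simp add: tendsto_norm_zero LIM_zero)
  have l2: "(\<lambda>n. norm (snd (X n) - b) powr (1 / (1 + real \<kappa>))) \<longlonglongrightarrow> 0"
    by (rule tendsto_zero_powrI[OF l2']) auto
  have up: "(\<lambda>n. norm (fst (X n) - a) + norm (snd (X n) - b) powr (1 / (1 + real \<kappa>))) \<longlonglongrightarrow> 0"
    using tendsto_add[OF l1 l2] by simp
  have "(\<lambda>n. dk \<kappa> (X n) (a, b)) \<longlonglongrightarrow> 0"
  proof (rule tendsto_sandwich[OF _ _ tendsto_const up])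
    show "\<forall>\<^sub>F n in sequentially. 0 \<le> dk \<kappa> (X n) (a, b)"
    proof (rule always_eventually, rule allI)
      fix n show "0 \<le> dk \<kappa> (X n) (a, b)"
        using nn[of "X n" "(a,b)"] norm_ge_zero[of "fst (X n) - fst (a,b)"] by linarith
    qed
    show "\<forall>\<^sub>F n in sequentially. dk \<kappa> (X n) (a, b) \<le> norm (fst (X n) - a) + norm (snd (X n) - b) powr (1 / (1 + real \<kappa>))"
      using dk_upper[of \<kappa> "X _" "(a,b)"] by simp
  qed
  then show ?thesis by blast
qed

end
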